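(* Assume $f_1,f_0$ are $\ell_1$-Lipschitz with constants $L_1,L_0$. Define $$L_{UN}:=\sup_{\pi\in[0,1],\;0<\Delta\le\pi}\Big(\pi L_1+(1-\pi)L_0+|f_1(0,\pi-\Delta)-f_0(0,\pi-\Delta)|\Big).$$ If $L_{UN}<1$, then $f(\pi)=\pi f_1(0,\pi)+(1-\pi)f_0(0,\pi)$ satisfies $|f(x)-f(y)|\le L_{UN}|x-y|$ for all $x,y\in[0,1]$; consequently $f$ has a unique fixed point $\pi^{\mathfrak e}$, the unconstrained policy is equalizing in discrete time, and if $\max_{j\in\{A,B\}}|\pi_0(1|j)-\pi^{\mathfrak e}|\le d$ then $|\pi_t(1|A)-\pi_t(1|B)|\le 2dL_{UN}^t$ for all $t\ge0$.
   Context: Two groups $A,B$; at time $t$ group $j$ has qualification profile $\pi_t(1|j)\in[0,1]$, $\pi_t(0|j)=1-\pi_t(1|j)$. Selection rates $\beta_t(v;j)=\tau(v;j)\pi_t(v|j)$ for a policy $\tau(v;j)\in[0,1]$. Dynamics: continuously differentiable $f_0,f_1:[0,1]^2\to[0,1]$, and in discrete time $\pi_{t+1}(1|j)=\pi_t(1|j)f_1(\beta_t(0;j),\beta_t(1;j))+(1-\pi_t(1|j))f_0(\beta_t(0;j),\beta_t(1;j))$. Under the unconstrained policy ($\tau(1;j)=1$, $\tau(0;j)=0$) each group evolves by $\pi_{t+1}=f(\pi_t)$. "$\ell_1$-Lipschitz with constant $L_i$" means $|f_i(x_1,x_2)-f_i(y_1,y_2)|\le L_i(|x_1-y_1|+|x_2-y_2|)$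 for all $x_1,x_2,y_1,y_2\in[0,1]$. Equalizing: $|\pi_t(1|A)-\pi_t(1|B)|\to0$ for all initial profiles. *)

theory Defs
  imports "HOL-Analysis.Analysis"
begin

definition unit_square :: "(real \<times> real) set" where
  "unit_square = {0..1} \<times> {0..1}"

definition C1_on_square :: "(real \<Rightarrow> real \<Rightarrow> real) \<Rightarrow> bool" where
  "C1_on_square g \<longleftrightarrow>
     (\<exists>g1 g2 :: real \<Rightarrow> real \<Rightarrow> real.
        continuous_on unit_square (\<lambda>(x, y). g1 x y) \<and>
        continuous_on unit_square (\<lambda>(x, y). g2 x y) \<and>
        (\<forall>x y. (x, y) \<in> unit_square \<longrightarrow>
           ((\<lambda>(u, v). g u v) has_derivative (\<lambda>(h, k). g1 x y * h + g2 x y * k))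
             (at (x, y) within unit_square)))"

definition l1_lipschitz :: "real \<Rightarrow> (real \<Rightarrow> real \<Rightarrow> real) \<Rightarrow> bool" where
  "l1_lipschitz L g \<longleftrightarrow>
     (\<forall>x1 x2 y1 y2. x1 \<in> {0..1} \<longrightarrow> x2 \<in> {0..1} \<longrightarrow> y1 \<in> {0..1} \<longrightarrow> y2 \<in> {0..1} \<longrightarrow>
        \<bar>g x1 x2 - g y1 y2\<bar> \<le> L * (\<bar>x1 - y1\<bar> + \<bar>x2 - y2\<bar>))"

text \<open>One step of the discrete-time dynamics of a single group with qualification profile
  p = pi_t(1|j) under policy tau(0;j) = tau0, tau(1;j) = tau1:
  beta_t(0;j) = tau0 * (1 - p), beta_t(1;j) = tau1 * p.\<close>
definition dyn_step :: "(real \<Rightarrow> real \<Rightarrow> real) \<Rightarrow> (real \<Rightarrow> real \<Rightarrow> real) \<Rightarrow> real \<Rightarrow> real \<Rightarrow> real \<Rightarrow> real" where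
  "dyn_step f0 f1 tau0 tau1 p =
     (let b0 = tau0 * (1 - p); b1 = tau1 * p in p * f1 b0 b1 + (1 - p) * f0 b0 b1)"

definition traj :: "(real \<Rightarrow> real \<Rightarrow> real) \<Rightarrow> (real \<Rightarrow> real \<Rightarrow> real) \<Rightarrow> real \<Rightarrow> real \<Rightarrow> real \<Rightarrow> nat \<Rightarrow> real" where
  "traj f0 f1 tau0 tau1 p0 t = ((dyn_step f0 f1 tau0 tau1) ^^ t) p0"

text \<open>Unconstrained policy: tau(1;j) = 1, tau(0;j) = 0 for both groups.\<close>
definition unconstrained_traj :: "(real \<Rightarrow> real \<Rightarrow> real) \<Rightarrow> (real \<Rightarrow> real \<Rightarrow> real) \<Rightarrow> real \<Rightarrow> nat \<Rightarrow> real" where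
  "unconstrained_traj f0 f1 p0 t = traj f0 f1 0 1 p0 t"

definition equalizing :: "(real \<Rightarrow> real \<Rightarrow> real) \<Rightarrow> (real \<Rightarrow> real \<Rightarrow> real) \<Rightarrow> real \<Rightarrow> real \<Rightarrow> bool" where
  "equalizing f0 f1 tau0 tau1 \<longleftrightarrow>
     (\<forall>pA pB. pA \<in> {0..1} \<longrightarrow> pB \<in> {0..1} \<longrightarrow>
        (\<lambda>t. \<bar>traj f0 f1 tau0 tau1 pA t - traj f0 f1 tau0 tau1 pB t\<bar>) \<longlonglongrightarrow> 0)"

end

theory Submission
  imports Defs
begin

theorem mainTheorem2:
  fixes f0 f1 :: "real \<Rightarrow> real \<Rightarrow> real" and L0 L1 :: real
  assumes range0: "\<And>x y. x \<in> {0..1} \<Longrightarrow> y \<in> {0..1} \<Longrightarrow> f0 x y \<in> {0..1}"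
    and range1: "\<And>x y. x \<in> {0..1} \<Longrightarrow> y \<in> {0..1} \<Longrightarrow> f1 x y \<in> {0..1}"
    and C1_0: "C1_on_square f0" and C1_1: "C1_on_square f1"
    and lip0: "l1_lipschitz L0 f0" and lip1: "l1_lipschitz L1 f1"
    and LUN_def: "LUN = Sup {pi * L1 + (1 - pi) * L0 + \<bar>f1 0 (pi - D) - f0 0 (pi - D)\<bar> | pi D.
                               0 \<le> pi \<and> pi \<le> 1 \<and> 0 < D \<and> D \<le> pi}"
    and f_def: "f = (\<lambda>pi. pi * f1 0 pi + (1 - pi) * f0 0 pi)"
    and LUN_lt: "LUN < 1"
  shows "(\<forall>x\<in>{0..1}. \<forall>y\<in>{0..1}. \<bar>f x - f y\<bar> \<le> LUN * \<bar>x - y\<bar>)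
       \<and> (\<exists>!pe. pe \<in> {0..1} \<and> f pe = pe)
       \<and> equalizing f0 f1 0 1
       \<and> (\<forall>pe pA pB d. pe \<in> {0..1} \<and> f pe = pe \<longrightarrow> pA \<in> {0..1} \<longrightarrow> pB \<in> {0..1} \<longrightarrow>
            max \<bar>pA - pe\<bar> \<bar>pB - pe\<bar> \<le> d \<longrightarrow>
            (\<forall>t. \<bar>unconstrained_traj f0 f1 pA t - unconstrained_traj f0 f1 pB t\<bar> \<le> 2 * d * LUN ^ t))"
proof -
  define S where "S = {pi * L1 + (1 - pi) * L0 + \<bar>f1 0 (pi - D) - f0 0 (pi - D)\<bar> | pi D.
                               0 \<le> pi \<and> pi \<le> 1 \<and> 0 < D \<and> D \<le> pi}"
  have LS: "LUN = Sup S" using LUN_def S_def by simp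
  have bdd: "bdd_above S"
  proof (rule bdd_aboveI)
    fix s assume "s \<in> S"
    then obtain pi D where s: "s = pi * L1 + (1 - pi) * L0 + \<bar>f1 0 (pi - D) - f0 0 (pi - D)\<bar>"
      and h: "0 \<le> pi" "pi \<le> 1" "0 < D" "D \<le> pi" unfolding S_def by blast
    have "f1 0 (pi - D) \<in> {0..1}" "f0 0 (pi - D) \<in> {0..1}" using h range0 range1 by auto
    hence a: "\<bar>f1 0 (pi - D) - f0 0 (pi - D)\<bar> \<le> 1" by auto
    have "pi * L1 \<le> \<bar>L1\<bar>"
    proof -
      have "pi * L1 \<le> pi * \<bar>L1\<bar>" using h by (intro mult_left_mono) auto
      also have "\<dots> \<le> 1 * \<bar>L1\<bar>" using h by (intro mult_right_mono) auto
      finally show ?thesis by simp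
    qed
    moreover have "(1 - pi) * L0 \<le> \<bar>L0\<bar>"
    proof -
      have "(1 - pi) * L0 \<le> (1 - pi) * \<bar>L0\<bar>" using h by (intro mult_left_mono) auto
      also have "\<dots> \<le> 1 * \<bar>L0\<bar>" using h by (intro mult_right_mono) auto
      finally show ?thesis by simp
    qed
    ultimately show "s \<le> \<bar>L1\<bar> + \<bar>L0\<bar> + 1" using s a by linarith
  qed
  have fin: "f x \<in> {0..1}" if "x \<in> {0..1}" for x
  proof -
    have "f1 0 x \<in> {0..1}" "f0 0 x \<in> {0..1}" using that range0 range1 by auto
    hence a: "0 \<le> f1 0 x" "f1 0 x \<le> 1" "0 \<le> f0 0 x" "f0 0 x \<le> 1" by auto
    have x: "0 \<le> x" "0 \<le> 1 - x" using that by auto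
    have "x * f1 0 x \<le> x * 1" using a x by (intro mult_left_mono) auto
    moreover have "(1 - x) * f0 0 x \<le> (1 - x) * 1" using a x by (intro mult_left_mono) auto
    moreover have "0 \<le> x * f1 0 x" "0 \<le> (1 - x) * f0 0 x" using a x by auto
    ultimately show ?thesis unfolding f_def by auto
  qed
  have lipo: "\<bar>f x - f y\<bar> \<le> LUN * (x - y)" if "0 \<le> y" "y < x" "x \<le> 1" for x y
  proof -
    define D where "D = x - y"
    have yD: "y = x - D" using D_def by simp
    have mem: "x * L1 + (1 - x) * L0 + \<bar>f1 0 (x - D) - f0 0 (x - D)\<bar> \<in> S"
      unfolding S_def using that D_def by (intro CollectI exI[of _ x] exI[of _ D]) auto
    have le: "x * L1 + (1 - x) * L0 + \<bar>f1 0 y - f0 0 y\<bar> \<le> LUN"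
      using cSup_upper[OF mem bdd] LS yD by simp
    have e: "f x - f y = x * (f1 0 x - f1 0 y) + (1 - x) * (f0 0 x - f0 0 y) + (x - y) * (f1 0 y - f0 0 y)"
      unfolding f_def by (simp add: algebra_simps)
    have l1: "\<bar>f1 0 x - f1 0 y\<bar> \<le> L1 * (x - y)"
      using lip1[unfolded l1_lipschitz_def, rule_format, of 0 x 0 y] that by simp
    have l0: "\<bar>f0 0 x - f0 0 y\<bar> \<le> L0 * (x - y)"
      using lip0[unfolded l1_lipschitz_def, rule_format, of 0 x 0 y] that by simp
    have "\<bar>f x - f y\<bar> \<le> x * \<bar>f1 0 x - f1 0 y\<bar> + (1 - x) * \<bar>f0 0 x - f0 0 y\<bar> + (x - y) * \<bar>f1 0 y - f0 0 y\<bar>"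
    proof -
      have "\<bar>f x - f y\<bar> \<le> \<bar>x * (f1 0 x - f1 0 y)\<bar> + \<bar>(1 - x) * (f0 0 x - f0 0 y)\<bar> + \<bar>(x - y) * (f1 0 y - f0 0 y)\<bar>"
        unfolding e by linarith
      moreover have "\<bar>x * (f1 0 x - f1 0 y)\<bar> = x * \<bar>f1 0 x - f1 0 y\<bar>" using that by (simp add: abs_mult)
      moreover have "\<bar>(1 - x) * (f0 0 x - f0 0 y)\<bar> = (1 - x) * \<bar>f0 0 x - f0 0 y\<bar>" using that by (simp add: abs_mult)
      moreover have "\<bar>(x - y) * (f1 0 y - f0 0 y)\<bar> = (x - y) * \<bar>f1 0 y - f0 0 y\<bar>" using that by (simp add: abs_mult)
      ultimately show ?thesis by linarith
    qed
    also have "\<dots> \<le> x * (L1 * (x - y)) + (1 - x) * (L0 * (x - y)) + (x - y) * \<bar>f1 0 y - f0 0 y\<bar>"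
      using that l1 l0 by (intro add_mono mult_left_mono) auto
    also have "\<dots> = (x - y) * (x * L1 + (1 - x) * L0 + \<bar>f1 0 y - f0 0 y\<bar>)"
      by (simp add: algebra_simps)
    also have "\<dots> \<le> (x - y) * LUN" using le that by (intro mult_left_mono) auto
    finally show ?thesis by (simp add: mult.commute)
  qed
  have lip: "\<bar>f x - f y\<bar> \<le> LUN * \<bar>x - y\<bar>" if "x \<in> {0..1}" "y \<in> {0..1}" for x y
  proof -
    consider "x = y" | "y < x" | "x < y" by linarith
    then show ?thesis
    proof cases
      case 2 thus ?thesis using lipo[of y x] that by auto
    next
      case 3 thus ?thesis using lipo[of x y] that by (auto simp: abs_minus_commute)
    qed auto
  qed
  have L0: "0 \<le> LUN" using lip[of 1 0] by auto
  have cont: "continuous_on {0..1} f"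
  proof (rule continuous_onI)
    fix x e :: real assume x: "x \<in> {0..1}" and e: "0 < e"
    show "\<exists>d>0. \<forall>x'\<in>{0..1}. dist x' x < d \<longrightarrow> dist (f x') (f x) \<le> e"
    proof (intro exI[of _ e] conjI ballI impI)
      fix x' assume "x' \<in> {0..1}" "dist x' x < e"
      then show "dist (f x') (f x) \<le> e"
      proof -
        have "\<bar>f x' - f x\<bar> \<le> LUN * \<bar>x' - x\<bar>" using lip[of x' x] x \<open>x' \<in> {0..1}\<close> by blast
        also have "\<dots> \<le> 1 * \<bar>x' - x\<bar>" using LUN_lt by (intro mult_right_mono) auto
        finally show ?thesis using \<open>dist x' x < e\<close> unfolding dist_real_def by simp
      qed
    qed (use e in auto)
  qed
  have ex: "\<exists>pe. pe \<in> {0..1} \<and> f pe = pe"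
  proof -
    have c2: "continuous_on {0..1} (\<lambda>x. f x - x)"
      by (intro continuous_intros cont)
    have "f 0 - 0 \<ge> 0" "f 1 - 1 \<le> 0" using fin[of 0] fin[of 1] by auto
    from IVT2'[of "\<lambda>x. f x - x", OF this(2) this(1)] c2
    obtain pe where "0 \<le> pe" "pe \<le> 1" "f pe - pe = 0" by auto
    thus ?thesis by auto
  qed
  have uniq: "p = q" if "p \<in> {0..1}" "f p = p" "q \<in> {0..1}" "f q = q" for p q
  proof -
    have "\<bar>p - q\<bar> \<le> LUN * \<bar>p - q\<bar>" using lip[of p q] that by simp
    hence "(1 - LUN) * \<bar>p - q\<bar> \<le> 0" by (simp add: algebra_simps)
    moreover have "0 < 1 - LUN" using LUN_lt by simp
    ultimately have "\<bar>p - q\<bar> \<le> 0" by (simp add: mult_le_0_iff)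
    thus ?thesis by simp
  qed
  have step: "dyn_step f0 f1 0 1 = f" unfolding dyn_step_def f_def by (auto simp: Let_def)
  have trin: "traj f0 f1 0 1 p t \<in> {0..1}" if "p \<in> {0..1}" for p t
  proof (induction t)
    case (Suc t)
    have "(f ^^ t) p \<in> {0..1}" using Suc by (simp add: traj_def step)
    hence "f ((f ^^ t) p) \<in> {0..1}" by (rule fin)
    thus ?case by (simp add: traj_def step)
  qed (use that in \<open>simp add: traj_def\<close>)
  have contr: "\<bar>traj f0 f1 0 1 a t - traj f0 f1 0 1 b t\<bar> \<le> LUN ^ t * \<bar>a - b\<bar>"
    if "a \<in> {0..1}" "b \<in> {0..1}" for a b t
  proof (induction t)
    case 0 thus ?case by (simp add: traj_def)
  next
    case (Suc t)
    have "\<bar>traj f0 f1 0 1 a (Suc t) - traj f0 f1 0 1 b (Suc t)\<bar>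
        = \<bar>f (traj f0 f1 0 1 a t) - f (traj f0 f1 0 1 b t)\<bar>" by (simp add: traj_def step)
    also have "\<dots> \<le> LUN * \<bar>traj f0 f1 0 1 a t - traj f0 f1 0 1 b t\<bar>"
      using lip trin that by blast
    also have "\<dots> \<le> LUN * (LUN ^ t * \<bar>a - b\<bar>)" using Suc L0 by (intro mult_left_mono) auto
    finally show ?case by simp
  qed
  have eq: "equalizing f0 f1 0 1"
    unfolding equalizing_def
  proof (intro allI impI)
    fix pA pB :: real assume h: "pA \<in> {0..1}" "pB \<in> {0..1}"
    have lim: "(\<lambda>t. LUN ^ t * \<bar>pA - pB\<bar>) \<longlonglongrightarrow> 0"
      using LIMSEQ_power_zero[of LUN] L0 LUN_lt by (intro tendsto_mult_left_zero) auto
    show "(\<lambda>t. \<bar>traj f0 f1 0 1 pA t - traj f0 f1 0 1 pB t\<bar>) \<longlonglongrightarrow> 0"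
      by (rule Lim_null_comparison[OF _ lim]) (use contr[OF h] in auto)
  qed
  have last: "\<forall>pe pA pB d. pe \<in> {0..1} \<and> f pe = pe \<longrightarrow> pA \<in> {0..1} \<longrightarrow> pB \<in> {0..1} \<longrightarrow>
            max \<bar>pA - pe\<bar> \<bar>pB - pe\<bar> \<le> d \<longrightarrow>
            (\<forall>t. \<bar>unconstrained_traj f0 f1 pA t - unconstrained_traj f0 f1 pB t\<bar> \<le> 2 * d * LUN ^ t)"
  proof (intro allI impI)
    fix pe pA pB d t assume h: "pe \<in> {0..1} \<and> f pe = pe" "pA \<in> {0..1}" "pB \<in> {0..1}"
      "max \<bar>pA - pe\<bar> \<bar>pB - pe\<bar> \<le> d"
    have "\<bar>pA - pB\<bar> \<le> 2 * d" using h(4) by auto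
    hence "LUN ^ t * \<bar>pA - pB\<bar> \<le> LUN ^ t * (2 * d)" using L0 by (intro mult_left_mono) auto
    thus "\<bar>unconstrained_traj f0 f1 pA t - unconstrained_traj f0 f1 pB t\<bar> \<le> 2 * d * LUN ^ t"
      using contr[OF h(2,3), of t] unfolding unconstrained_traj_def by (simp add: mult.commute)
  qed
  show ?thesis using lip ex uniq eq last by blast
qed

end
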